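(* Let $F$ be an algebraically closed field (of arbitrary characteristic) and let $V\subseteq M_2(F)$ be a Mathieu subspace with $\dim_FV=2$. Then either $V\subseteq I_2^\perp=\{b\in M_2(F):\mathrm{Tr}(b)=0\}$, or there exist nonzero idempotents $e_1,e_2\in M_2(F)$ with $e_1+e_2=I_2$ and distinct nonzero $\lambda_1,\lambda_2\in F$ with $\lambda_1+\lambda_2\ne0$ such that $V=F(\lambda_1e_1+\lambda_2e_2)+e_1M_2(F)e_2$. Equivalently, either $V\subseteq I_2^\perp$ or $V$ is conjugate to $\left\{\begin{pmatrix}\lambda_1s&t\\0&\lambda_2s\end{pmatrix}: s,t\in F\right\}$ for some distinct nonzero $\lambda_1,\lambda_2\in F$ with $\lambda_1+\lambda_2\ne0$.
   Context: Let $\mathcal A$ be an associative algebra over a field $F$. An $F$-subspace $M\subseteq\mathcal A$ is a Mathieu subspace (MS) of $\mathcal A$ if for all $a,b,c\in\mathcal A$ such that $a^m\in M$ for all $m\ge 1$, there exists $N$ (depending on $a,b,c$) such that $ba^mc\in M$ for all $m\ge N$. *)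

theory Defs
  imports "HOL-Analysis.Analysis" "HOL-Computational_Algebra.Polynomial"
begin

definition msmult :: "'a::times \<Rightarrow> 'a^'n^'m \<Rightarrow> 'a^'n^'m" (infixl \<open>*\<^sub>M\<close> 70) where
  "c *\<^sub>M A = (\<chi> i j. c * A$i$j)"

text \<open>Matrix power w.r.t. matrix multiplication (note: (*) on vec is componentwise).\<close>
definition matpow :: "'a::semiring_1^'n^'n \<Rightarrow> nat \<Rightarrow> 'a^'n^'n" where
  "matpow a m = ((\<lambda>x. a ** x) ^^ m) (mat 1)"

definition mathieu_subspace :: "('a::field ^'n^'n) set \<Rightarrow> bool" where
  "mathieu_subspace M \<longleftrightarrow>
     (0 \<in> M \<and> (\<forall>x\<in>M. \<forall>y\<in>M. x + y \<in> M) \<and> (\<forall>c x. x \<in> M \<longrightarrow> c *\<^sub>M x \<in> M)) \<and>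
     (\<forall>a b c. (\<forall>m::nat. m \<ge> 1 \<longrightarrow> matpow a m \<in> M) \<longrightarrow>
        (\<exists>N. \<forall>m\<ge>N. b ** matpow a m ** c \<in> M))"

definition dim2 :: "('a::field ^'n^'n) set \<Rightarrow> bool" where
  "dim2 V \<longleftrightarrow> (\<exists>A B. (\<forall>s t. s *\<^sub>M A + t *\<^sub>M B = 0 \<longrightarrow> s = 0 \<and> t = 0) \<and>
                     V = {s *\<^sub>M A + t *\<^sub>M B | s t. True})"

end

theory Submission
  imports Defs
begin

lemma two_ne_one[simp]: "(2::2) \<noteq> 1" "(1::2) \<noteq> 2" by simp_all
lemma m2_eq: "(X::'a^2^2) = Y \<longleftrightarrow> X$1$1=Y$1$1 \<and> X$1$2 = Y$1$2 \<and> X$2$1 = Y$2$1 \<and> X$2$2=Y$2$2"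
  by (auto simp add: vec_eq_iff forall_2)

lemma mult_ent[simp]: "((A::'a::semiring_1^2^2) ** (B::'a^2^2))$i$j = A$i$1 * B$1$j + A$i$2 * B$2$j"
  by (simp add: matrix_matrix_mult_def sum_2)

lemma msmult_ent[simp]: "(c *\<^sub>M A)$i$j = c * A$i$j"
  by (simp add: msmult_def)

lemma mat_ent[simp]: "(mat c :: 'a::zero^2^2)$i$j = (if i = j then c else 0)"
  by (simp add: mat_def)

lemma trace2: "trace (A::'a::semiring_1^2^2) = A$1$1 + A$2$2"
  by (simp add: trace_def sum_2)

lemma ms_mult_l: "((c *\<^sub>M (A::'a::field^2^2)) ** (B::'a^2^2)) = c *\<^sub>M (A ** B)"
  by (simp add: m2_eq algebra_simps)
lemma ms_mult_r: "((A::'a::field^2^2) ** (c *\<^sub>M (B::'a^2^2))) = c *\<^sub>M (A ** B)"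
  by (simp add: m2_eq algebra_simps)

lemma matpow_Suc: "matpow a (Suc m) = a ** matpow a m"
  by (simp add: matpow_def)

lemma matpow_idem:
  assumes "(e::'a::field^2^2) ** e = e" shows "m \<ge> 1 \<Longrightarrow> matpow e m = e"
proof (induction m)
  case 0 then show ?case by simp
next
  case (Suc m)
  show ?case
  proof (cases "m = 0")
    case True then show ?thesis by (simp add: matpow_Suc matpow_def)
  next
    case False then show ?thesis using Suc assms by (simp add: matpow_Suc)
  qed
qed

definition Em :: "2 \<Rightarrow> 2 \<Rightarrow> 'a::field^2^2" where
  "Em k l = (\<chi> r s. if r = k \<and> s = l then 1 else 0)"

lemma Em_sandwich: "Em k i ** (x::'a::field^2^2) ** Em j l = x$i$j *\<^sub>M Em k l"
  using exhaust_2[of k] exhaust_2[of i] exhaust_2[of j] exhaust_2[of l]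
  by (auto simp: m2_eq Em_def)

lemma three_in_two:
  fixes a11 a12 a22 b11 b12 b22 s1 s2 s3 t1 t2 t3 :: "'a::field"
  assumes "1 = s1 * a11 + t1 * b11" "0 = s1 * a12 + t1 * b12" "0 = s1 * a22 + t1 * b22"
   "0 = s2 * a11 + t2 * b11" "1 = s2 * a12 + t2 * b12" "0 = s2 * a22 + t2 * b22"
   "0 = s3 * a11 + t3 * b11" "0 = s3 * a12 + t3 * b12" "1 = s3 * a22 + t3 * b22"
  shows False
proof -
  have "(0::'a) = 1" using assms by algebra
  then show False by simp
qed

lemma no_idem:
  assumes ms: "mathieu_subspace V" and d: "dim2 (V::('a::field^2^2) set)"
    and xV: "x \<in> V" and xx: "x ** x = x" shows "x = 0"
proof (rule ccontr)
  assume nz: "x \<noteq> 0"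
  have pw: "\<forall>m::nat. m \<ge> 1 \<longrightarrow> matpow x m \<in> V" using matpow_idem[OF xx] xV by auto
  have sand: "b ** x ** c \<in> V" for b c
  proof -
    from ms pw obtain N where "\<forall>m\<ge>N. b ** matpow x m ** c \<in> V"
      unfolding mathieu_subspace_def by blast
    then have "b ** matpow x (max N 1) ** c \<in> V" by auto
    then show "b ** x ** c \<in> V" using matpow_idem[OF xx, of "max N 1"] by auto
  qed
  from nz obtain i j where ij: "x$i$j \<noteq> 0" by (auto simp: vec_eq_iff)
  have sc: "\<forall>c y. y \<in> V \<longrightarrow> c *\<^sub>M y \<in> V" using ms unfolding mathieu_subspace_def by blast
  have E: "Em k l \<in> V" for k l
  proof -
    have "(1/x$i$j) *\<^sub>M (Em k i ** x ** Em j l) \<in> V" using sc sand by blast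
    also have "(1/x$i$j) *\<^sub>M (Em k i ** x ** Em j l) = Em k l" using ij
      by (simp add: Em_sandwich m2_eq)
    finally show ?thesis .
  qed
  from d obtain A B where VAB: "V = {s *\<^sub>M A + t *\<^sub>M B | s t. True}" unfolding dim2_def by blast
  obtain s1 t1 where h1: "Em 1 1 = s1 *\<^sub>M A + t1 *\<^sub>M B" using E[of 1 1] VAB by blast
  obtain s2 t2 where h2: "Em 1 2 = s2 *\<^sub>M A + t2 *\<^sub>M B" using E[of 1 2] VAB by blast
  obtain s3 t3 where h3: "Em 2 2 = s3 *\<^sub>M A + t3 *\<^sub>M B" using E[of 2 2] VAB by blast
  from h1 have "1 = s1 * A$1$1 + t1 * B$1$1" "0 = s1 * A$1$2 + t1 * B$1$2" "0 = s1 * A$2$2 + t1 * B$2$2"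
    by (simp_all add: m2_eq Em_def)
  moreover from h2 have "0 = s2 * A$1$1 + t2 * B$1$1" "1 = s2 * A$1$2 + t2 * B$1$2" "0 = s2 * A$2$2 + t2 * B$2$2"
    by (simp_all add: m2_eq Em_def)
  moreover from h3 have "0 = s3 * A$1$1 + t3 * B$1$1" "0 = s3 * A$1$2 + t3 * B$1$2" "1 = s3 * A$2$2 + t3 * B$2$2"
    by (simp_all add: m2_eq Em_def)
  ultimately show False by (rule three_in_two)
qed

lemma quad_noroot:
  fixes p0 p1 p2 :: "'a::alg_closed_field"
  assumes h: "\<forall>t. p0 + p1 * t + p2 * t^2 \<noteq> 0" shows "p1 = 0 \<and> p2 = 0"
proof -
  have p2: "p2 = 0"
  proof (rule ccontr)
    assume "p2 \<noteq> 0"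
    then obtain x where "(\<Sum>k\<le>2. (if k=0 then p0 else if k=1 then p1 else p2) * x^k) = 0"
      using alg_closed[of 2 "\<lambda>k. if k=0 then p0 else if k=1 then p1 else p2"] by auto
    then have "p0 + p1 * x + p2 * x^2 = 0" by (simp add: numeral_2_eq_2 algebra_simps)
    with h show False by blast
  qed
  moreover have "p1 = 0"
  proof (rule ccontr)
    assume "p1 \<noteq> 0"
    have "p0 + p1 * (-p0/p1) + p2 * (-p0/p1)^2 = 0" using p2 \<open>p1\<noteq>0\<close> by (simp add: field_simps)
    with h show False by blast
  qed
  ultimately show ?thesis by simp
qed

lemma CH_idem: assumes "trace (x::'a::field^2^2) = 1" "det x = 0" shows "x ** x = x"
proof -
  have h: "x$1$1 + x$2$2 = 1" "x$1$1 * x$2$2 - x$1$2 * x$2$1 = 0" using assms by (simp_all add: trace2 det_2)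
  have "x$1$1 * x$1$1 + x$1$2 * x$2$1 = x$1$1" using h by algebra
  moreover have "x$1$1 * x$1$2 + x$1$2 * x$2$2 = x$1$2" using h by algebra
  moreover have "x$2$1 * x$1$1 + x$2$2 * x$2$1 = x$2$1" using h by algebra
  moreover have "x$2$1 * x$1$2 + x$2$2 * x$2$2 = x$2$2" using h by algebra
  ultimately show ?thesis by (simp add: m2_eq)
qed

lemma nilp:
  fixes X N :: "'a::field^2^2"
  assumes tX: "trace X = 0" and tN: "trace N = 0" and dN: "det N = 0" and XN: "X ** N = 0" and Nz: "N \<noteq> 0"
  shows "\<exists>k. X = k *\<^sub>M N"
proof -
  define x where "x = X$1$1"
  define y where "y = X$1$2"
  define z where "z = X$2$1"
  define v where "v = X$2$2"
  define u where "u = N$1$1"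
  define p where "p = N$1$2"
  define q where "q = N$2$1"
  define w where "w = N$2$2"
  have h: "x + v = 0" "u + w = 0" "u * w - p * q = 0"
    using tX tN dN by (simp_all add: trace2 det_2 x_def v_def u_def w_def p_def q_def)
  have hn: "x * u + y * q = 0" "x * p + y * w = 0" "z * u + v * q = 0" "z * p + v * w = 0"
    using XN unfolding m2_eq by (simp_all add: x_def y_def z_def v_def u_def p_def q_def w_def)
  have nz: "u \<noteq> 0 \<or> p \<noteq> 0 \<or> q \<noteq> 0 \<or> w \<noteq> 0"
    using Nz unfolding m2_eq by (auto simp add: u_def p_def q_def w_def)
  have "\<exists>k. x = k * u \<and> y = k * p \<and> z = k * q \<and> v = k * w"
  proof (cases "p = 0")
    case False
    have "x * p = y * u" "z * p = y * q" "v * p = y * w" using h hn by algebra+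
    then have "x = (y/p) * u \<and> y = (y/p) * p \<and> z = (y/p) * q \<and> v = (y/p) * w" using False
      by (simp add: field_simps)
    then show ?thesis by blast
  next
    case True
    have "u * u = 0" using h True by algebra
    then have u0: "u = 0" by simp
    then have w0: "w = 0" using h by simp
    then have q0: "q \<noteq> 0" using nz u0 True by simp
    have "y * q = 0" "v * q = 0" using hn u0 by simp_all
    then have y0: "y = 0" and v0: "v = 0" using q0 by simp_all
    then have x0: "x = 0" using h by simp
    have "x = (z/q) * u \<and> y = (z/q) * p \<and> z = (z/q) * q \<and> v = (z/q) * w"
      using q0 u0 w0 x0 y0 v0 True by simp
    then show ?thesis by blast
  qed
  then obtain k where "x = k * u \<and> y = k * p \<and> z = k * q \<and> v = k * w" by blast
  then have "X = k *\<^sub>M N" unfolding m2_eq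
    by (simp add: x_def y_def z_def v_def u_def p_def q_def w_def)
  then show ?thesis by blast
qed

lemma eig_lemma:
  fixes a b c d u p q w :: "'a::field"
  assumes tD: "a + d = 1" and tN: "u + w = 0" and dN: "u * w - p * q = 0"
    and L: "a * w + d * u - b * q - c * p = 0" and nz: "u \<noteq> 0 \<or> p \<noteq> 0 \<or> q \<noteq> 0 \<or> w \<noteq> 0"
  shows "\<exists>l. a * u + b * q = l * u \<and> a * p + b * w = l * p \<and> c * u + d * q = l * q \<and> c * p + d * w = l * w"
proof (cases "p = 0")
  case False
  define l where "l = (a * p + b * w)/p"
  have "(a * u + b * q) * p = (a * p + b * w) * u" "(c * u + d * q) * p = (a * p + b * w) * q" "(c * p + d * w) * p = (a * p+b * w) * w"
    using assms by algebra+
  then have "a * u + b * q = l * u \<and> a * p + b * w = l * p \<and> c * u + d * q = l * q \<and> c * p + d * w = l * w"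
    using False unfolding l_def by (simp add: field_simps)
  then show ?thesis by blast
next
  case True
  have "u * u = 0" using tN dN True by algebra
  then have u0: "u = 0" by simp
  then have w0: "w = 0" using tN by simp
  have "b * q = 0" using L u0 w0 True by simp
  then have "a * u + b * q = d * u \<and> a * p + b * w = d * p \<and> c * u + d * q = d * q \<and> c * p + d * w = d * w"
    using u0 w0 True by simp
  then show ?thesis by blast
qed

lemma respan:
  fixes A B D N :: "'a::field^2^2"
  assumes VAB: "V = {s *\<^sub>M A + t *\<^sub>M B | s t. True}"
    and add: "\<forall>x\<in>V. \<forall>y\<in>V. x+y \<in> V" and sc: "\<forall>c x. x \<in> V \<longrightarrow> c *\<^sub>M x \<in> V"
    and DV: "D \<in> V" and NV: "N \<in> V"
    and ind: "\<forall>c t. c *\<^sub>M D + t *\<^sub>M N = 0 \<longrightarrow> c = 0 \<and> t = 0"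
  shows "V = {c *\<^sub>M D + t *\<^sub>M N | c t. True}"
proof
  show "{c *\<^sub>M D + t *\<^sub>M N | c t. True} \<subseteq> V" using add sc DV NV by auto
  show "V \<subseteq> {c *\<^sub>M D + t *\<^sub>M N | c t. True}"
  proof
    fix x assume "x \<in> V"
    then obtain s t where x: "x = s *\<^sub>M A + t *\<^sub>M B" using VAB by auto
    obtain s1 t1 where D: "D = s1 *\<^sub>M A + t1 *\<^sub>M B" using DV VAB by auto
    obtain s2 t2 where N: "N = s2 *\<^sub>M A + t2 *\<^sub>M B" using NV VAB by auto
    have dl: "s1 * t2 - s2 * t1 \<noteq> 0"
    proof
      assume d0: "s1 * t2 - s2 * t1 = 0"
      have "t2 *\<^sub>M D + (-t1) *\<^sub>M N = 0" unfolding D N m2_eq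
        using d0 by (simp add: algebra_simps; (intro conjI; algebra)?)
      then have t: "t2 = 0 \<and> t1 = 0" using ind by fastforce
      have "s2 *\<^sub>M D + (-s1) *\<^sub>M N = 0" unfolding D N m2_eq
        using d0 by (simp add: algebra_simps; (intro conjI; algebra)?)
      then have s: "s2 = 0 \<and> s1 = 0" using ind by fastforce
      have "1 *\<^sub>M D + 0 *\<^sub>M N = 0" unfolding D using s t by (simp add: m2_eq)
      then show False using ind by fastforce
    qed
    define dd where "dd = s1 * t2 - s2 * t1"
    have dd: "dd \<noteq> 0" using dl dd_def by simp
    define k1 where "k1 = (s * t2 - t * s2)/dd"
    define k2 where "k2 = (t * s1 - s * t1)/dd"
    have "(s * t2 - t * s2) * s1 + (t * s1 - s * t1) * s2 = s * dd" unfolding dd_def by algebra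
    then have e1: "k1 * s1 + k2 * s2 = s" unfolding k1_def k2_def using dd by (simp add: field_simps)
    have "(s * t2 - t * s2) * t1 + (t * s1 - s * t1) * t2 = t * dd" unfolding dd_def by algebra
    then have e2: "k1 * t1 + k2 * t2 = t" unfolding k1_def k2_def using dd by (simp add: field_simps)
    have key: "k1 * (s1 * a + t1 * b) + k2 * (s2 * a + t2 * b) = s * a + t * b" for a b
      unfolding e1[symmetric] e2[symmetric] by (simp add: algebra_simps)
    have "x = k1 *\<^sub>M D + k2 *\<^sub>M N"
      unfolding x D N m2_eq by (simp add: key)
    then show "x \<in> {c *\<^sub>M D + t *\<^sub>M N | c t. True}" by blast
  qed
qed

lemma ms_assoc: "c *\<^sub>M (d *\<^sub>M (X::'a::field^2^2)) = (c * d) *\<^sub>M X"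
  by (simp add: m2_eq)

lemma ms_add: "c *\<^sub>M (X::'a::field^2^2) + c *\<^sub>M Y = c *\<^sub>M (X + Y)"
  by (simp add: m2_eq algebra_simps)

lemma ms_one[simp]: "1 *\<^sub>M (X::'a::field^2^2) = X"
  by (simp add: m2_eq)

lemma trace_zero2[simp]: "trace (0::'a::semiring_1^2^2) = 0"
  by (simp add: trace2)

lemma trace_cyc: "trace ((X::'a::field^2^2) ** (Y::'a^2^2)) = trace (Y ** X)"
  by (simp add: trace2 algebra_simps)

lemma mul_zero_r[simp]: "(X::'a::field^2^2) ** (0::'a^2^2) = 0"
  by (simp add: m2_eq)
lemma mul_zero_l[simp]: "(0::'a::field^2^2) ** (X::'a^2^2) = 0"
  by (simp add: m2_eq)

theorem corollary3p2:
  fixes V :: "('a::alg_closed_field ^2^2) set"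
  assumes "mathieu_subspace V" and "dim2 V"
  shows "V \<subseteq> {b. trace b = 0} \<or>
    (\<exists>e1 e2 (l1::'a) (l2::'a). e1 \<noteq> 0 \<and> e2 \<noteq> 0 \<and> e1 ** e1 = e1 \<and> e2 ** e2 = e2 \<and>
       e1 + e2 = mat 1 \<and> l1 \<noteq> 0 \<and> l2 \<noteq> 0 \<and> l1 \<noteq> l2 \<and> l1 + l2 \<noteq> 0 \<and>
       V = {c *\<^sub>M (l1 *\<^sub>M e1 + l2 *\<^sub>M e2) + e1 ** m ** e2 | c m. True})"
proof (cases "V \<subseteq> {b. trace b = 0}")
  case True
  then show ?thesis by blast
next
  case False
  note nt = False
  have add: "\<forall>x\<in>V. \<forall>y\<in>V. x + y \<in> V" and sc: "\<forall>c x. x \<in> V \<longrightarrow> c *\<^sub>M x \<in> V"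
    using assms(1) unfolding mathieu_subspace_def by auto
  have noid: "x \<in> V \<Longrightarrow> x ** x = x \<Longrightarrow> x = 0" for x using no_idem assms by blast
  obtain A B where ind: "\<forall>s t. s *\<^sub>M A + t *\<^sub>M B = 0 \<longrightarrow> s = 0 \<and> t = 0"
    and VAB: "V = {s *\<^sub>M A + t *\<^sub>M B | s t. True}"
    using assms(2) unfolding dim2_def by blast
  define \<alpha> where "\<alpha> = trace A"
  define \<beta> where "\<beta> = trace B"
  have trlin: "trace (s *\<^sub>M A + t *\<^sub>M B) = s * \<alpha> + t * \<beta>" for s t
    unfolding \<alpha>_def \<beta>_def trace2 by (simp add: algebra_simps)
  have ab: "\<alpha> \<noteq> 0 \<or> \<beta> \<noteq> 0"
  proof -
    from nt obtain x where "x \<in> V" "trace x \<noteq> 0" by auto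
    then obtain s t where "x = s *\<^sub>M A + t *\<^sub>M B" "trace x \<noteq> 0" using VAB by auto
    then show ?thesis using trlin by auto
  qed
  define N where "N = \<beta> *\<^sub>M A + (-\<alpha>) *\<^sub>M B"
  define D where "D = (if \<alpha> \<noteq> 0 then (1/\<alpha>) *\<^sub>M A + 0 *\<^sub>M B else 0 *\<^sub>M A + (1/\<beta>) *\<^sub>M B)"
  have NV: "N \<in> V" unfolding N_def VAB by blast
  have DV: "D \<in> V" unfolding D_def VAB by auto
  have trN: "trace N = 0" unfolding N_def trlin by (simp add: algebra_simps)
  have trD: "trace D = 1" using ab unfolding D_def by (auto simp: trlin)
  have Nnz: "N \<noteq> 0"
  proof
    assume "N = 0"
    then have "\<beta> = 0 \<and> -\<alpha> = 0" using ind unfolding N_def by blast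
    with ab show False by simp
  qed
  have trlin2: "trace (c *\<^sub>M D + t *\<^sub>M N) = c * trace D + t * trace N" for c t
    by (simp add: trace2 algebra_simps)
  have indDN: "\<forall>c t. c *\<^sub>M D + t *\<^sub>M N = 0 \<longrightarrow> c = 0 \<and> t = 0"
  proof (intro allI impI)
    fix c t assume h: "c *\<^sub>M D + t *\<^sub>M N = 0"
    then have "trace (c *\<^sub>M D + t *\<^sub>M N) = 0" by (simp add: trace2)
    then have c0: "c = 0" using trD trN trlin2 by simp
    then have "t *\<^sub>M N = 0" using h by (simp add: m2_eq)
    moreover from Nnz obtain i j where "N$i$j \<noteq> 0" by (auto simp: vec_eq_iff)
    ultimately have "t = 0" by (auto simp: vec_eq_iff)
    with c0 show "c = 0 \<and> t = 0" by simp
  qed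
  have VDN: "V = {c *\<^sub>M D + t *\<^sub>M N | c t. True}" by (rule respan[OF VAB add sc DV NV indDN])
  have trt: "trace (D + t *\<^sub>M N) = 1" for t
  proof -
    have "trace (D + t *\<^sub>M N) = trace D + t * trace N" by (simp add: trace2 algebra_simps)
    with trD trN show ?thesis by simp
  qed
  have detnz: "det (D + t *\<^sub>M N) \<noteq> 0" for t
  proof
    assume "det (D + t *\<^sub>M N) = 0"
    then have "(D + t *\<^sub>M N) ** (D + t *\<^sub>M N) = D + t *\<^sub>M N" using CH_idem trt by blast
    moreover have "D + t *\<^sub>M N \<in> V" using add sc DV NV by blast
    ultimately have "D + t *\<^sub>M N = 0" using noid by blast
    with trt[of t] show False by simp
  qed
  define a where "a = D$1$1"
  define b where "b = D$1$2"
  define c where "c = D$2$1"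
  define d where "d = D$2$2"
  define u where "u = N$1$1"
  define p where "p = N$1$2"
  define q where "q = N$2$1"
  define w where "w = N$2$2"
  note ents = a_def b_def c_def d_def u_def p_def q_def w_def
  have tD: "a + d = 1" using trD by (simp add: trace2 ents)
  have tN: "u + w = 0" using trN by (simp add: trace2 ents)
  have Nnz': "u \<noteq> 0 \<or> p \<noteq> 0 \<or> q \<noteq> 0 \<or> w \<noteq> 0" using Nnz unfolding m2_eq by (auto simp: ents)
  have "\<forall>t. (a * d - b * c) + (a * w + d * u - b * q - c * p) * t + (u * w - p * q) * t^2 \<noteq> 0"
  proof
    fix t
    have "det (D + t *\<^sub>M N) = (a * d - b * c) + (a * w + d * u - b * q - c * p) * t + (u * w - p * q) * t^2"
      by (simp add: det_2 ents power2_eq_square algebra_simps)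
    with detnz[of t] show "(a * d - b * c) + (a * w + d * u - b * q - c * p) * t + (u * w - p * q) * t^2 \<noteq> 0"
      by simp
  qed
  from quad_noroot[OF this] have L: "a * w + d * u - b * q - c * p = 0" and dN: "u * w - p * q = 0" by auto
  have "D + 0 *\<^sub>M N = D" by (simp add: m2_eq)
  then have detD: "a * d - b * c \<noteq> 0" using detnz[of 0] by (simp add: det_2 ents)
  obtain l1 where eig: "a * u + b * q = l1 * u" "a * p + b * w = l1 * p" "c * u + d * q = l1 * q" "c * p + d * w = l1 * w"
    using eig_lemma[OF tD tN dN L Nnz'] by blast
  define l2 where "l2 = 1 - l1"
  have eig2: "u * a + p * c = l2 * u" "u * b + p * d = l2 * p" "q * a + w * c = l2 * q" "q * b + w * d = l2 * w"
    using tD tN L eig unfolding l2_def by algebra+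
  have "((a - l1) * (d - l1) - b * c) * u = 0" "((a - l1) * (d - l1) - b * c) * p = 0"
       "((a - l1) * (d - l1) - b * c) * q = 0" "((a - l1) * (d - l1) - b * c) * w = 0"
    using eig by algebra+
  then have "(a - l1) * (d - l1) - b * c = 0" using Nnz' by auto
  then have dl: "a * d - b * c = l1 * l2" using tD unfolding l2_def by algebra
  have l1nz: "l1 \<noteq> 0" and l2nz: "l2 \<noteq> 0" using detD dl by auto
  have l12sum: "l1 + l2 = 1" unfolding l2_def by simp
  have l12: "l1 \<noteq> l2"
  proof
    assume e: "l1 = l2"
    define X where "X = D - l1 *\<^sub>M mat 1"
    have tX: "trace X = 0" using tD e l12sum unfolding X_def by (simp add: trace2 ents)
    have XN: "X ** N = 0" using eig unfolding X_def m2_eq by (simp add: ents algebra_simps)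
    obtain k where k: "X = k *\<^sub>M N" using nilp[OF tX trN _ XN Nnz] dN by (simp add: det_2 ents) blast
    have "mat 1 = (1/l1) *\<^sub>M D + (-k/l1) *\<^sub>M N"
      using k l1nz unfolding X_def m2_eq by (simp add: field_simps)
    moreover have "(1/l1) *\<^sub>M D + (-k/l1) *\<^sub>M N \<in> V" using add sc DV NV by blast
    ultimately have "mat 1 \<in> V" by simp
    then have "(mat 1 :: 'a^2^2) = 0" using noid by simp
    then show False unfolding m2_eq by simp
  qed
  have lnz: "l1 - l2 \<noteq> 0" "l2 - l1 \<noteq> 0" using l12 by auto
  define F1 where "F1 = D - l2 *\<^sub>M mat 1"
  define F2 where "F2 = l1 *\<^sub>M mat 1 - D"
  define e1 where "e1 = (1/(l1-l2)) *\<^sub>M F1"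
  define e2 where "e2 = (1/(l1-l2)) *\<^sub>M F2"
  have E1: "e1$1$1 = (a - l2)/(l1-l2)" "e1$1$2 = b/(l1-l2)" "e1$2$1 = c/(l1-l2)" "e1$2$2 = (d - l2)/(l1-l2)"
    unfolding e1_def F1_def by (simp_all add: ents)
  have E2: "e2$1$1 = (l1 - a)/(l1-l2)" "e2$1$2 = -b/(l1-l2)" "e2$2$1 = -c/(l1-l2)" "e2$2$2 = (l1 - d)/(l1-l2)"
    unfolding e2_def F2_def by (simp_all add: ents)
  note hyps = tD dl l12sum
  have "F1 + F2 = (l1 - l2) *\<^sub>M mat 1" unfolding F1_def F2_def m2_eq by simp
  then have sum: "e1 + e2 = mat 1" unfolding e1_def e2_def ms_add using lnz by (simp add: ms_assoc)
  have F1sq: "F1 ** F1 = (l1-l2) *\<^sub>M F1" unfolding F1_def m2_eq using hyps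
    by (simp add: ents algebra_simps; (intro conjI; algebra)?)
  have F2sq: "F2 ** F2 = (l1-l2) *\<^sub>M F2" unfolding F2_def m2_eq using hyps
    by (simp add: ents algebra_simps; (intro conjI; algebra)?)
  have F21: "F2 ** F1 = 0" unfolding F1_def F2_def m2_eq using hyps
    by (simp add: ents algebra_simps; (intro conjI; algebra)?)
  have idem1: "e1 ** e1 = e1" unfolding e1_def ms_mult_l ms_mult_r F1sq using lnz by (simp add: ms_assoc)
  have idem2: "e2 ** e2 = e2" unfolding e2_def ms_mult_l ms_mult_r F2sq using lnz by (simp add: ms_assoc)
  have e21: "e2 ** e1 = 0" unfolding e1_def e2_def ms_mult_l ms_mult_r F21 by (simp add: m2_eq)
  have e1nz: "e1 \<noteq> 0"
  proof
    assume "e1 = 0"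
    then have z: "a = l2" "b = 0" "c = 0" "d = l2" unfolding m2_eq using lnz by (auto simp add: E1)
    have "(l1 - l2) * u = 0" "(l1 - l2) * p = 0" "(l1 - l2) * q = 0" "(l1 - l2) * w = 0"
      using eig z by algebra+
    then show False using lnz Nnz' by auto
  qed
  have e2nz: "e2 \<noteq> 0"
  proof
    assume "e2 = 0"
    then have z: "a = l1" "b = 0" "c = 0" "d = l1" unfolding m2_eq using lnz by (auto simp add: E2)
    have "(l1 - l2) * u = 0" "(l1 - l2) * p = 0" "(l1 - l2) * q = 0" "(l1 - l2) * w = 0"
      using eig2 z by algebra+
    then show False using lnz Nnz' by auto
  qed
  have "l1 *\<^sub>M F1 + l2 *\<^sub>M F2 = (l1 - l2) *\<^sub>M D" unfolding F1_def F2_def m2_eq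
    by (simp add: algebra_simps)
  moreover have "l1 *\<^sub>M e1 + l2 *\<^sub>M e2 = (1/(l1-l2)) *\<^sub>M (l1 *\<^sub>M F1 + l2 *\<^sub>M F2)"
    unfolding e1_def e2_def m2_eq by (simp add: algebra_simps)
  ultimately have Dform: "l1 *\<^sub>M e1 + l2 *\<^sub>M e2 = D" using lnz by (simp add: ms_assoc)
  have "F1 ** N = (l1 - l2) *\<^sub>M N" unfolding F1_def m2_eq using eig
    by (simp add: ents algebra_simps; (intro conjI; algebra)?)
  then have e1N: "e1 ** N = N" unfolding e1_def ms_mult_l using lnz by (simp add: ms_assoc)
  have "N ** F2 = (l1 - l2) *\<^sub>M N" unfolding F2_def m2_eq using eig2 l12sum
    by (simp add: ents algebra_simps; (intro conjI; algebra)?)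
  then have Ne2: "N ** e2 = N" unfolding e2_def ms_mult_r using lnz by (simp add: ms_assoc)
  have e2N: "e2 ** N = 0"
  proof -
    have "e2 ** N = e2 ** (e1 ** N)" using e1N by simp
    also have "... = (e2 ** e1) ** N" by (simp add: matrix_mul_assoc)
    finally show ?thesis using e21 by simp
  qed
  have Vform: "V = {c *\<^sub>M (l1 *\<^sub>M e1 + l2 *\<^sub>M e2) + e1 ** m ** e2 | c m. True}"
  proof -
    have "{c *\<^sub>M D + t *\<^sub>M N | c t. True} = {c *\<^sub>M D + e1 ** m ** e2 | c m. True}"
    proof (intro set_eqI iffI)
      fix x assume "x \<in> {c *\<^sub>M D + t *\<^sub>M N | c t. True}"
      then obtain c t where x: "x = c *\<^sub>M D + t *\<^sub>M N" by blast
      have "e1 ** (t *\<^sub>M N) ** e2 = t *\<^sub>M N"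
        by (simp add: ms_mult_r ms_mult_l e1N Ne2)
      then have "x = c *\<^sub>M D + e1 ** (t *\<^sub>M N) ** e2" using x by simp
      then show "x \<in> {c *\<^sub>M D + e1 ** m ** e2 | c m. True}" by blast
    next
      fix x assume "x \<in> {c *\<^sub>M D + e1 ** m ** e2 | c m. True}"
      then obtain c m where x: "x = c *\<^sub>M D + e1 ** m ** e2" by blast
      have tX: "trace (e1 ** m ** e2) = 0"
      proof -
        have "trace (e1 ** m ** e2) = trace (e1 ** (m ** e2))" by (simp add: matrix_mul_assoc)
        also have "... = trace ((m ** e2) ** e1)" by (rule trace_cyc)
        also have "... = trace (m ** (e2 ** e1))" by (simp add: matrix_mul_assoc)
        finally show ?thesis using e21 by (simp add: trace2)
      qed
      have XN: "(e1 ** m ** e2) ** N = 0"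
      proof -
        have "(e1 ** m ** e2) ** N = (e1 ** m) ** (e2 ** N)" by (simp add: matrix_mul_assoc)
        then show ?thesis using e2N by simp
      qed
      have dN': "det N = 0" using dN by (simp add: det_2 ents)
      obtain k where "e1 ** m ** e2 = k *\<^sub>M N" using nilp[OF tX trN dN' XN Nnz] by blast
      then have "x = c *\<^sub>M D + k *\<^sub>M N" using x by simp
      then show "x \<in> {c *\<^sub>M D + t *\<^sub>M N | c t. True}" by blast
    qed
    then show ?thesis using VDN Dform by simp
  qed
  have "\<exists>e1 e2 (l1::'a) (l2::'a). e1 \<noteq> 0 \<and> e2 \<noteq> 0 \<and> e1 ** e1 = e1 \<and> e2 ** e2 = e2 \<and>
       e1 + e2 = mat 1 \<and> l1 \<noteq> 0 \<and> l2 \<noteq> 0 \<and> l1 \<noteq> l2 \<and> l1 + l2 \<noteq> 0 \<and>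
       V = {c *\<^sub>M (l1 *\<^sub>M e1 + l2 *\<^sub>M e2) + e1 ** m ** e2 | c m. True}"
    using e1nz e2nz idem1 idem2 sum l1nz l2nz l12 l12sum Vform by force
  then show ?thesis by blast
qed

end
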